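(* Let $n\ge2$ and let $T=(n;\sigma,\delta,-\sigma)$ with $\sigma,\delta\in\mathbb{R}$, $\sigma\ne0$ (a real shifted skew-symmetric tridiagonal Toeplitz matrix). Then every eigenvalue $\lambda_h$ of $T$ has $\mathcal A_{\mathcal T}$-structured condition number $\kappa_{\mathcal A_{\mathcal T}}(\lambda_h)=\frac1{\sqrt n}$, $h=1,\dots,n$.
   Context: $(n;\sigma,\delta,\tau)$ is the $n\times n$ tridiagonal Toeplitz matrix with diagonal $\delta$, superdiagonal $\tau$, subdiagonal $\sigma$. For $\sigma\tau\ne0$ the eigenvalue $\lambda_h=\delta+2\sqrt{\sigma\tau}\cos\frac{h\pi}{n+1}$ has right eigenvector $x_h$ with $x_{h,k}=(\sqrt{\sigma/\tau})^k\sin\frac{hk\pi}{n+1}$ and left eigenvector $y_h$ ($y_h^HT=\lambda_hy_h^H$) with $y_{h,k}=(\sqrt{\bar\tau/\bar\sigma})^k\sin\frac{hk\pi}{n+1}$; let $\widetilde x_h,\widetilde y_h$ be their normalizations, $\kappa(\lambda_h)=\|x_h\|_2\|y_h\|_2/|y_h^Hx_h|$ (here equal to $1$), and $W_h=\widetilde y_h\widetilde x_h^H$. $\mathcal A_{\mathcal T}$ denotes the real subspace of real matrices $(n;s,d,-s)$, $s,d\in\mathbb{R}$; $W_h|_{\mathcal A_{\mathcal T}}$ is the orthogonal projection of $W_h$ onto $\mathcal A_{\mathcal T}$ with respect to the real Frobenius inner product $\mathrm{Re}\,\mathrm{tr}(A^HB)$, and $\kappa_{\mathcal A_{\mathcal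 T}}(\lambda_h)=\kappa(\lambda_h)\|W_h|_{\mathcal A_{\mathcal T}}\|_F$. *)

theory Defs
  imports Complex_Main
begin

text \<open>n-by-n matrices are represented as functions nat => nat => complex, indexed by
  {1..n} x {1..n} (entries outside this range are zero); vectors as nat => complex
  indexed by {1..n}.\<close>

definition tridiag_toeplitz :: "nat \<Rightarrow> complex \<Rightarrow> complex \<Rightarrow> complex \<Rightarrow> nat \<Rightarrow> nat \<Rightarrow> complex" where
  "tridiag_toeplitz n \<sigma> \<delta> \<tau> = (\<lambda>i j.
     if i \<in> {1..n} \<and> j \<in> {1..n} then
       (if i = j then \<delta> else if i = j + 1 then \<sigma> else if j = i + 1 then \<tau> else 0)
     else 0)"

definition tt_eigval :: "nat \<Rightarrow> complex \<Rightarrow> complex \<Rightarrow> complex \<Rightarrow> nat \<Rightarrow> complex" where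
  "tt_eigval n \<sigma> \<delta> \<tau> h = \<delta> + 2 * csqrt (\<sigma> * \<tau>) * complex_of_real (cos (real h * pi / real (n + 1)))"

definition tt_rvec :: "nat \<Rightarrow> complex \<Rightarrow> complex \<Rightarrow> nat \<Rightarrow> nat \<Rightarrow> complex" where
  "tt_rvec n \<sigma> \<tau> h k = (csqrt (\<sigma> / \<tau>)) ^ k * complex_of_real (sin (real h * real k * pi / real (n + 1)))"

definition tt_lvec :: "nat \<Rightarrow> complex \<Rightarrow> complex \<Rightarrow> nat \<Rightarrow> nat \<Rightarrow> complex" where
  "tt_lvec n \<sigma> \<tau> h k = (csqrt (cnj \<tau> / cnj \<sigma>)) ^ k * complex_of_real (sin (real h * real k * pi / real (n + 1)))"

definition vnorm2 :: "nat \<Rightarrow> (nat \<Rightarrow> complex) \<Rightarrow> real" where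
  "vnorm2 n x = sqrt (\<Sum>k\<in>{1..n}. (cmod (x k))\<^sup>2)"

definition vinner :: "nat \<Rightarrow> (nat \<Rightarrow> complex) \<Rightarrow> (nat \<Rightarrow> complex) \<Rightarrow> complex" where
  "vinner n u v = (\<Sum>k\<in>{1..n}. cnj (u k) * v k)"

definition vnormalize :: "nat \<Rightarrow> (nat \<Rightarrow> complex) \<Rightarrow> nat \<Rightarrow> complex" where
  "vnormalize n x = (\<lambda>k. x k / complex_of_real (vnorm2 n x))"

definition tt_kappa :: "nat \<Rightarrow> complex \<Rightarrow> complex \<Rightarrow> complex \<Rightarrow> nat \<Rightarrow> real" where
  "tt_kappa n \<sigma> \<delta> \<tau> h =
     vnorm2 n (tt_rvec n \<sigma> \<tau> h) * vnorm2 n (tt_lvec n \<sigma> \<tau> h)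
       / cmod (vinner n (tt_lvec n \<sigma> \<tau> h) (tt_rvec n \<sigma> \<tau> h))"

definition tt_W :: "nat \<Rightarrow> complex \<Rightarrow> complex \<Rightarrow> nat \<Rightarrow> nat \<Rightarrow> nat \<Rightarrow> complex" where
  "tt_W n \<sigma> \<tau> h = (\<lambda>i j.
     if i \<in> {1..n} \<and> j \<in> {1..n} then
       vnormalize n (tt_lvec n \<sigma> \<tau> h) i * cnj (vnormalize n (tt_rvec n \<sigma> \<tau> h) j)
     else 0)"

definition frob_inner :: "nat \<Rightarrow> (nat \<Rightarrow> nat \<Rightarrow> complex) \<Rightarrow> (nat \<Rightarrow> nat \<Rightarrow> complex) \<Rightarrow> real" where
  "frob_inner n A B = Re (\<Sum>i\<in>{1..n}. \<Sum>j\<in>{1..n}. cnj (A i j) * B i j)"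

definition frob_norm :: "nat \<Rightarrow> (nat \<Rightarrow> nat \<Rightarrow> complex) \<Rightarrow> real" where
  "frob_norm n A = sqrt (\<Sum>i\<in>{1..n}. \<Sum>j\<in>{1..n}. (cmod (A i j))\<^sup>2)"

definition A_T :: "nat \<Rightarrow> (nat \<Rightarrow> nat \<Rightarrow> complex) set" where
  "A_T n = {M. \<exists>s d :: real. M = tridiag_toeplitz n (of_real s) (of_real d) (- of_real s)}"

definition proj_A_T :: "nat \<Rightarrow> (nat \<Rightarrow> nat \<Rightarrow> complex) \<Rightarrow> nat \<Rightarrow> nat \<Rightarrow> complex" where
  "proj_A_T n W = (THE P. P \<in> A_T n \<and> (\<forall>A \<in> A_T n. frob_inner n A (\<lambda>i j. W i j - P i j) = 0))"

text \<open>(The matrix T = (n; sigma, delta, tau) has eigenvalue tt_eigval n sigma delta tau h with these eigenvectors; the condition numbers do not depend on delta.) Structured condition number kappa_{A_T}(lambda_h).\<close>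
definition tt_kappa_AT :: "nat \<Rightarrow> complex \<Rightarrow> complex \<Rightarrow> complex \<Rightarrow> nat \<Rightarrow> real" where
  "tt_kappa_AT n \<sigma> \<delta> \<tau> h = tt_kappa n \<sigma> \<delta> \<tau> h * frob_norm n (proj_A_T n (tt_W n \<sigma> \<tau> h))"

end

theory Submission
  imports Defs
begin

abbreviation TT where "TT n s d \<equiv> tridiag_toeplitz n (complex_of_real s) (complex_of_real d) (- complex_of_real s)"

lemma row_sum:
  assumes "i \<in> {1..n}"
  shows "(\<Sum>j\<in>{1..n}. cnj (TT n s d i j) * M i j) =
    of_real d * M i i + (if 2 \<le> i then of_real s * M i (i-1) else 0)
      - (if i < n then of_real s * M i (i+1) else 0)"
proof -
  have "(\<Sum>j\<in>{1..n}. cnj (TT n s d i j) * M i j) =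
    (\<Sum>j\<in>{1..n}. (if j = i then of_real d * M i j else 0)
      + (if 2 \<le> i then (if j = i - 1 then of_real s * M i j else 0) else 0)
      - (if i < n then (if j = i + 1 then of_real s * M i j else 0) else 0))"
    using assms by (intro sum.cong) (auto simp: tridiag_toeplitz_def)
  also have "\<dots> = of_real d * M i i + (if 2 \<le> i then of_real s * M i (i-1) else 0)
      - (if i < n then of_real s * M i (i+1) else 0)"
    using assms by (auto simp add: sum.distrib sum_subtractf)
  finally show ?thesis .
qed

lemma frob_T:
  "frob_inner n (TT n s d) M = d * Re (\<Sum>i\<in>{1..n}. M i i)
     + s * (\<Sum>i\<in>{1..n}. (if 2 \<le> i then Re (M i (i-1)) else 0) - (if i < n then Re (M i (i+1)) else 0))"
proof -
  have "frob_inner n (TT n s d) M = Re (\<Sum>i\<in>{1..n}. of_real d * M i i + (if 2 \<le> i then of_real s * M i (i-1) else 0)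
      - (if i < n then of_real s * M i (i+1) else 0))"
    unfolding frob_inner_def by (subst sum.cong[OF refl row_sum]) auto
  also have "\<dots> = d * Re (\<Sum>i\<in>{1..n}. M i i)
     + s * (\<Sum>i\<in>{1..n}. (if 2 \<le> i then Re (M i (i-1)) else 0) - (if i < n then Re (M i (i+1)) else 0))"
  proof -
    have "\<And>i. Re (of_real d * M i i + (if 2 \<le> i then of_real s * M i (i-1) else 0)
      - (if i < n then of_real s * M i (i+1) else 0)) = d * Re (M i i) + s * ((if 2 \<le> i then Re (M i (i-1)) else 0) - (if i < n then Re (M i (i+1)) else 0))"
      by (simp add: algebra_simps)
    then show ?thesis by (simp only: Re_sum sum.distrib sum_distrib_left)
  qed
  finally show ?thesis .
qed

lemma frob_diff: "frob_inner n A (\<lambda>i j. W i j - P i j) = frob_inner n A W - frob_inner n A P"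
  unfolding frob_inner_def by (simp add: ring_distribs sum_subtractf)

lemma csqrt_m1: "csqrt (-1) = \<i>"
  by (simp add: csqrt.code complex_eq_iff)

lemma rvec: "\<sigma> \<noteq> 0 \<Longrightarrow> tt_rvec n (of_real \<sigma>) (- of_real \<sigma>) h k
   = \<i> ^ k * of_real (sin (real h * real k * pi / real (n + 1)))"
  unfolding tt_rvec_def by (simp add: csqrt_m1)

lemma lvec: "\<sigma> \<noteq> 0 \<Longrightarrow> tt_lvec n (of_real \<sigma>) (- of_real \<sigma>) h k
   = \<i> ^ k * of_real (sin (real h * real k * pi / real (n + 1)))"
  unfolding tt_lvec_def by (simp add: csqrt_m1)

lemma vnorm_v: "vnorm2 n (\<lambda>k. \<i> ^ k * of_real (r k)) = sqrt (\<Sum>k\<in>{1..n}. (r k)^2)"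
  unfolding vnorm2_def by (simp add: norm_mult norm_power)

lemma cnj_ipow: "cnj (\<i> ^ k) = (- \<i>) ^ k"
  by simp

lemma ipow_prod: "\<i> ^ k * (- \<i>) ^ k = 1"
  by (simp add: power_mult_distrib[symmetric])

lemma vinner_v: "vinner n (\<lambda>k. \<i> ^ k * of_real (r k)) (\<lambda>k. \<i> ^ k * of_real (r k)) = of_real (\<Sum>k\<in>{1..n}. (r k)^2)"
proof -
  have "\<And>k. cnj (\<i> ^ k * of_real (r k)) * (\<i> ^ k * of_real (r k)) = of_real ((r k)^2)"
  proof -
    fix k
    have "cnj (\<i> ^ k * of_real (r k)) * (\<i> ^ k * of_real (r k)) = (\<i> ^ k * (- \<i>) ^ k) * of_real ((r k)^2)"
      by (simp add: power2_eq_square)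
    then show "cnj (\<i> ^ k * of_real (r k)) * (\<i> ^ k * of_real (r k)) = of_real ((r k)^2)"
      by (simp only: ipow_prod) simp
  qed
  then show ?thesis unfolding vinner_def by simp
qed

lemma re_off1: "Re (\<i> ^ (b+1) * (- \<i>) ^ b * of_real x) = 0"
proof -
  have "\<i> ^ (b+1) * (- \<i>) ^ b = \<i> * (\<i> ^ b * (- \<i>) ^ b)" by simp
  then have e: "\<i> ^ (b+1) * (- \<i>) ^ b = \<i>" by (simp only: ipow_prod) simp
  show ?thesis unfolding e by simp
qed

lemma re_off2: "Re (\<i> ^ a * (- \<i>) ^ (a+1) * of_real x) = 0"
proof -
  have "\<i> ^ a * (- \<i>) ^ (a+1) = - \<i> * (\<i> ^ a * (- \<i>) ^ a)" by simp
  then have e: "\<i> ^ a * (- \<i>) ^ (a+1) = - \<i>" by (simp only: ipow_prod) simp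
  show ?thesis unfolding e by simp
qed


definition cnt :: "nat \<Rightarrow> real" where
  "cnt n = (\<Sum>i\<in>{1..n}. (if 2 \<le> i then 1 else 0) + (if i < n then 1 else 0))"

lemma cnt_ge: "2 \<le> n \<Longrightarrow> cnt n \<ge> 1"
proof -
  assume n: "2 \<le> n"
  have "cnt n = (1 + 0) + (\<Sum>i\<in>{Suc 1..n}. (if 2 \<le> i then 1 else 0) + (if i < n then 1 else 0))"
    unfolding cnt_def using n by (subst sum.atLeast_Suc_atMost) auto
  moreover have "(\<Sum>i\<in>{Suc 1..n}. (if 2 \<le> i then 1 else 0) + (if i < n then 1 else (0::real))) \<ge> 0"
    by (rule sum_nonneg) auto
  ultimately show ?thesis by simp
qed

lemma D_TT: "Re (\<Sum>i\<in>{1..n}. TT n s d i i) = real n * d"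
  by (simp add: tridiag_toeplitz_def)

lemma O_TT: "(\<Sum>i\<in>{1..n}. (if 2 \<le> i then Re (TT n s d i (i-1)) else 0) - (if i < n then Re (TT n s d i (i+1)) else 0))
   = s * cnt n"
  unfolding cnt_def sum_distrib_left
  by (rule sum.cong) (auto simp: tridiag_toeplitz_def)

lemma frob_TT: "frob_inner n (TT n s d) (TT n s' d') = d * (real n * d') + s * (s' * cnt n)"
  unfolding frob_T D_TT O_TT by simp

theorem proposition15:
  fixes n :: nat and \<sigma> \<delta> :: real
  assumes "n \<ge> 2" and "\<sigma> \<noteq> 0"
  shows "\<forall>h \<in> {1..n}. tt_kappa_AT n (of_real \<sigma>) (of_real \<delta>) (- of_real \<sigma>) h = 1 / sqrt (real n)"
proof
  fix h assume h: "h \<in> {1..n}"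
  define r where "r k = sin (real h * real k * pi / real (n + 1))" for k
  define R where "R = (\<Sum>k\<in>{1..n}. (r k)^2)"
  have rv: "tt_rvec n (of_real \<sigma>) (- of_real \<sigma>) h = (\<lambda>k. \<i> ^ k * of_real (r k))"
    unfolding r_def by (rule ext, rule rvec[OF assms(2)])
  have lv: "tt_lvec n (of_real \<sigma>) (- of_real \<sigma>) h = (\<lambda>k. \<i> ^ k * of_real (r k))"
    unfolding r_def by (rule ext, rule lvec[OF assms(2)])
  have r1: "r 1 > 0"
  proof -
    have "real h < real (n + 1)" using h by simp
    then have "real h * pi < real (n + 1) * pi" by simp
    then have "real h * 1 * pi / real (n + 1) < pi" by (simp add: field_simps)
    moreover have "0 < real h * 1 * pi / real (n + 1)" using h by simp
    ultimately show ?thesis unfolding r_def by (simp add: sin_gt_zero)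
  qed
  have Rpos: "R > 0"
  proof -
    have "(r 1)^2 \<le> R" unfolding R_def
      by (rule member_le_sum) (use assms(1) in auto)
    then show ?thesis using r1 by (smt (verit) zero_less_power)
  qed
  have kap: "tt_kappa n (of_real \<sigma>) (of_real \<delta>) (- of_real \<sigma>) h = 1"
    unfolding tt_kappa_def rv lv vnorm_v vinner_v R_def[symmetric]
    using Rpos by simp
  define W where "W = tt_W n (of_real \<sigma>) (- of_real \<sigma>) h"
  have Wij: "W i j = \<i> ^ i * (- \<i>) ^ j * of_real (r i * r j / R)" if "i \<in> {1..n}" "j \<in> {1..n}" for i j
  proof -
    have "W i j = (\<i> ^ i * of_real (r i) / of_real (sqrt R)) * cnj (\<i> ^ j * of_real (r j) / of_real (sqrt R))"
      unfolding W_def tt_W_def vnormalize_def rv lv vnorm_v R_def[symmetric] using that by simp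
    also have "\<dots> = \<i> ^ i * (- \<i>) ^ j * of_real (r i * r j) / (of_real (sqrt R) * of_real (sqrt R))"
      by (simp add: cnj_ipow)
    also have "(of_real (sqrt R) * of_real (sqrt R) :: complex) = of_real R"
      using Rpos by (simp flip: of_real_mult)
    finally show ?thesis by simp
  qed
  have DW: "Re (\<Sum>i\<in>{1..n}. W i i) = 1"
  proof -
    have "Re (\<Sum>i\<in>{1..n}. W i i) = (\<Sum>i\<in>{1..n}. (r i)^2 / R)"
      unfolding Re_sum
    proof (rule sum.cong)
      fix i assume i: "i \<in> {1..n}"
      show "Re (W i i) = (r i)^2 / R" unfolding Wij[OF i i] ipow_prod
        by (simp add: power2_eq_square)
    qed simp
    also have "\<dots> = R / R" unfolding R_def by (simp only: sum_divide_distrib[symmetric])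
    finally show ?thesis using Rpos by simp
  qed
  have OW: "(\<Sum>i\<in>{1..n}. (if 2 \<le> i then Re (W i (i-1)) else 0) - (if i < n then Re (W i (i+1)) else 0)) = 0"
  proof (rule sum.neutral, rule ballI)
    fix i assume i: "i \<in> {1..n}"
    have a: "Re (W i (i-1)) = 0" if "2 \<le> i"
    proof -
      have w: "W i (i-1) = \<i> ^ i * (- \<i>) ^ (i-1) * of_real (r i * r (i-1) / R)"
        using i that by (intro Wij) auto
      have e: "\<i> ^ i = \<i> ^ ((i - 1) + 1)" using that by simp
      show ?thesis by (simp only: w e re_off1)
    qed
    have b: "Re (W i (i+1)) = 0" if "i < n"
    proof -
      have w: "W i (i+1) = \<i> ^ i * (- \<i>) ^ (i+1) * of_real (r i * r (i+1) / R)"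
        using i that by (intro Wij) auto
      show ?thesis by (simp only: w re_off2)
    qed
    show "(if 2 \<le> i then Re (W i (i-1)) else 0) - (if i < n then Re (W i (i+1)) else 0) = 0"
      using a b by simp
  qed
  have frW: "frob_inner n (TT n s d) W = d" for s d
    unfolding frob_T DW OW by simp
  have npos: "real n > 0" using assms(1) by simp
  have proj: "proj_A_T n W = TT n 0 (1 / real n)"
    unfolding proj_A_T_def
  proof (rule the_equality)
    show "TT n 0 (1 / real n) \<in> A_T n \<and> (\<forall>A\<in>A_T n. frob_inner n A (\<lambda>i j. W i j - TT n 0 (1 / real n) i j) = 0)"
    proof
      show "TT n 0 (1 / real n) \<in> A_T n" unfolding A_T_def by blast
      show "\<forall>A\<in>A_T n. frob_inner n A (\<lambda>i j. W i j - TT n 0 (1 / real n) i j) = 0"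
      proof
        fix A assume "A \<in> A_T n"
        then obtain s d where A: "A = TT n s d" unfolding A_T_def by blast
        have "frob_inner n A (\<lambda>i j. W i j - TT n 0 (1 / real n) i j) = d - (d * (real n * (1 / real n)) + s * (0 * cnt n))"
          unfolding A by (simp only: frob_diff frW frob_TT)
        then show "frob_inner n A (\<lambda>i j. W i j - TT n 0 (1 / real n) i j) = 0" using npos by simp
      qed
    qed
  next
    fix P assume P: "P \<in> A_T n \<and> (\<forall>A\<in>A_T n. frob_inner n A (\<lambda>i j. W i j - P i j) = 0)"
    then obtain s' d' where Pe: "P = TT n s' d'" unfolding A_T_def by auto
    have "TT n 0 1 \<in> A_T n" "TT n 1 0 \<in> A_T n" unfolding A_T_def by blast+
    with P have e1: "frob_inner n (TT n 0 1) (\<lambda>i j. W i j - P i j) = 0"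
      and e2: "frob_inner n (TT n 1 0) (\<lambda>i j. W i j - P i j) = 0" by auto
    from e1 have "1 - real n * d' = 0" unfolding frob_diff Pe frW frob_TT by simp
    then have d': "d' = 1 / real n" using npos by (simp add: field_simps)
    from e2 have "s' * cnt n = 0" unfolding frob_diff Pe frW frob_TT by simp
    then have s': "s' = 0" using cnt_ge[OF assms(1)] by auto
    show "P = TT n 0 (1 / real n)" using Pe d' s' by simp
  qed
  have nrm: "frob_norm n (TT n 0 (1 / real n)) = 1 / sqrt (real n)"
  proof -
    have "(\<Sum>i\<in>{1..n}. \<Sum>j\<in>{1..n}. (cmod (TT n 0 (1 / real n) i j))\<^sup>2) = (\<Sum>i\<in>{1..n}. (1 / real n)^2)"
    proof (rule sum.cong)
      fix i assume i: "i \<in> {1..n}"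
      have "(\<Sum>j\<in>{1..n}. (cmod (TT n 0 (1 / real n) i j))\<^sup>2) = (\<Sum>j\<in>{1..n}. if j = i then (1 / real n)^2 else 0)"
        by (rule sum.cong) (auto simp: tridiag_toeplitz_def i norm_divide)
      also have "\<dots> = (1 / real n)^2" using i by simp
      finally show "(\<Sum>j\<in>{1..n}. (cmod (TT n 0 (1 / real n) i j))\<^sup>2) = (1 / real n)^2" .
    qed simp
    also have "\<dots> = 1 / real n" using npos by (simp add: power2_eq_square)
    finally show ?thesis unfolding frob_norm_def by (simp add: real_sqrt_divide)
  qed
  show "tt_kappa_AT n (of_real \<sigma>) (of_real \<delta>) (- of_real \<sigma>) h = 1 / sqrt (real n)"
    unfolding tt_kappa_AT_def kap W_def[symmetric] proj nrm by simp
qed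

end
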